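(* Let $n \ge 1$ and let $G$ be a (nonempty) subgraph of the hypercube $Q_n$ with average degree $d$. Then $G$ contains a geodesic of length at least $d$.
   Context: The hypercube $Q_n$ has vertex set $\{0,1\}^n$, two vertices being adjacent iff they differ in exactly one coordinate; the direction of an edge is that coordinate. A path in $Q_n$ is a geodesic if no two of its edges have the same direction. The length of a path is its number of edges. The average degree of $G$ is $2|E(G)|/|V(G)|$. *)

theory Defs
  imports Complex_Main
begin

definition cube_vertices :: "nat \<Rightarrow> bool list set" where
  "cube_vertices n = {xs. length xs = n}"

definition cube_adj :: "bool list \<Rightarrow> bool list \<Rightarrow> bool" where
  "cube_adj u v \<longleftrightarrow> length u = length v \<and> card {i. i < length u \<and> u ! i \<noteq> v ! i} = 1"

definition cube_subgraph :: "nat \<Rightarrow> bool list set \<Rightarrow> bool list set set \<Rightarrow> bool" where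
  "cube_subgraph n V E \<longleftrightarrow> V \<subseteq> cube_vertices n \<and>
     E \<subseteq> {{u, v} | u v. u \<in> V \<and> v \<in> V \<and> cube_adj u v}"

definition edge_dir :: "bool list \<Rightarrow> bool list \<Rightarrow> nat" where
  "edge_dir u v = (THE i. i < length u \<and> u ! i \<noteq> v ! i)"

text \<open>A path in G given by its vertex list; its length is length p - 1.\<close>
definition is_path :: "bool list set \<Rightarrow> bool list set set \<Rightarrow> bool list list \<Rightarrow> bool" where
  "is_path V E p \<longleftrightarrow> p \<noteq> [] \<and> distinct p \<and> set p \<subseteq> V \<and>
     (\<forall>j < length p - 1. {p ! j, p ! Suc j} \<in> E)"

definition is_geodesic :: "bool list set \<Rightarrow> bool list set set \<Rightarrow> bool list list \<Rightarrow> bool" where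
  "is_geodesic V E p \<longleftrightarrow> is_path V E p \<and>
     inj_on (\<lambda>j. edge_dir (p ! j) (p ! Suc j)) {..<length p - 1}"

definition avg_degree :: "bool list set \<Rightarrow> bool list set set \<Rightarrow> real" where
  "avg_degree V E = 2 * real (card E) / real (card V)"

end

theory Submission
  imports Defs
begin

definition flip :: "nat \<Rightarrow> bool list \<Rightarrow> bool list" where
  "flip k v = v[k := (\<not> v ! k)]"

lemma dir_unique:
  assumes "cube_adj u v"
  shows "{i. i < length u \<and> u ! i \<noteq> v ! i} = {edge_dir u v}"
proof -
  from assms have "card {i. i < length u \<and> u ! i \<noteq> v ! i} = 1" unfolding cube_adj_def by blast
  then obtain i where i: "{i. i < length u \<and> u ! i \<noteq> v ! i} = {i}" by (rule card_1_singletonE)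
  have "edge_dir u v = i" unfolding edge_dir_def
    by (rule the_equality) (use i in auto)
  with i show ?thesis by simp
qed

lemma adj_sym: "cube_adj u v \<Longrightarrow> cube_adj v u"
proof -
  assume a: "cube_adj u v"
  then have l: "length u = length v" unfolding cube_adj_def by blast
  have "{i. i < length v \<and> v ! i \<noteq> u ! i} = {i. i < length u \<and> u ! i \<noteq> v ! i}"
    using l by auto
  with a l show ?thesis unfolding cube_adj_def by simp
qed

lemma dir_sym: "length u = length v \<Longrightarrow> edge_dir u v = edge_dir v u"
  unfolding edge_dir_def by metis

lemma dir_less: "cube_adj u v \<Longrightarrow> edge_dir u v < length u"
  using dir_unique[of u v] by blast

lemma adj_same: "cube_adj u v \<Longrightarrow> j < length u \<Longrightarrow> j \<noteq> edge_dir u v \<Longrightarrow> u ! j = v ! j"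
  using dir_unique[of u v] by blast

lemma adj_neq: "cube_adj u v \<Longrightarrow> u \<noteq> v"
  using dir_unique[of u v] by blast

lemma adj_flip: "cube_adj u v \<Longrightarrow> v = flip (edge_dir u v) u"
proof -
  assume a: "cube_adj u v"
  have len: "length u = length v" using a by (simp add: cube_adj_def)
  have d: "u ! edge_dir u v \<noteq> v ! edge_dir u v" using dir_unique[OF a] by blast
  show ?thesis
  proof (rule nth_equalityI)
    show "length v = length (flip (edge_dir u v) u)" using len by (simp add: flip_def)
    fix j assume "j < length v"
    then show "v ! j = flip (edge_dir u v) u ! j"
      using adj_same[OF a, of j] d len by (cases "j = edge_dir u v") (auto simp: flip_def)
  qed
qed

lemma flip_diff: "k < length v \<Longrightarrow> {i. i < length v \<and> v ! i \<noteq> flip k v ! i} = {k}"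
  by (auto simp: flip_def nth_list_update)

lemma flip_adj: "k < length v \<Longrightarrow> cube_adj v (flip k v)"
  using flip_diff[of k v] by (simp add: cube_adj_def flip_def)

lemma flip_dir: "k < length v \<Longrightarrow> edge_dir v (flip k v) = k"
  using dir_unique[OF flip_adj, of k v] flip_diff[of k v] by auto

lemma flip_flip: "flip k (flip k v) = v"
  by (cases "k < length v") (auto simp: flip_def list_update_beyond)

lemma flip_len[simp]: "length (flip k v) = length v"
  by (simp add: flip_def)


definition mygeod :: "bool list set \<Rightarrow> bool list set set \<Rightarrow> nat set \<Rightarrow> bool list list \<Rightarrow> bool" where
  "mygeod V E D p \<longleftrightarrow> p \<noteq> [] \<and> distinct p \<and> set p \<subseteq> V \<and>
     (\<forall>j < length p - 1. {p ! j, p ! Suc j} \<in> E \<and> edge_dir (p ! j) (p ! Suc j) \<in> D) \<and>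
     inj_on (\<lambda>j. edge_dir (p ! j) (p ! Suc j)) {..<length p - 1}"

definition ED :: "bool list set set \<Rightarrow> nat set \<Rightarrow> bool list set set" where
  "ED E D = {e\<in>E. \<exists>u v. e = {u,v} \<and> cube_adj u v \<and> edge_dir u v \<in> D}"

lemma edge_adj:
  assumes "cube_subgraph n V E" "{a,b} \<in> E"
  shows "cube_adj a b" "a \<in> V" "b \<in> V"
proof -
  from assms obtain u v where "{a,b} = {u,v}" "u \<in> V" "v \<in> V" "cube_adj u v"
    unfolding cube_subgraph_def by blast
  then show "cube_adj a b" "a \<in> V" "b \<in> V" using adj_sym by (auto simp: doubleton_eq_iff)
qed

lemma sub_len: "cube_subgraph n V E \<Longrightarrow> v \<in> V \<Longrightarrow> length v = n"
  unfolding cube_subgraph_def cube_vertices_def by blast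

lemma sub_finite:
  assumes "cube_subgraph n V E" shows "finite V" "finite E"
proof -
  have "V \<subseteq> {xs. set xs \<subseteq> UNIV \<and> length xs = n}"
    using assms unfolding cube_subgraph_def cube_vertices_def by auto
  moreover have "finite {xs::bool list. set xs \<subseteq> UNIV \<and> length xs = n}"
    by (rule finite_lists_length_eq) simp
  ultimately show fv: "finite V" by (rule finite_subset)
  have "E \<subseteq> Pow V" using assms unfolding cube_subgraph_def by blast
  then show "finite E" using fv by (meson finite_Pow_iff finite_subset)
qed

lemma ED_dir:
  assumes "e \<in> ED E D" "e = {a,b}" "cube_adj a b"
  shows "edge_dir a b \<in> D"
proof -
  from assms obtain u v where "e = {u,v}" "cube_adj u v" "edge_dir u v \<in> D"
    unfolding ED_def by blast
  with assms show ?thesis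
    by (metis cube_adj_def dir_sym doubleton_eq_iff)
qed

lemma coord_path:
  assumes sub: "cube_subgraph n V E" and g: "mygeod V E D q" and kD: "k \<notin> D" and kn: "k < n"
  shows "\<forall>j < length q. q ! j ! k = q ! 0 ! k"
proof (intro allI impI)
  fix j assume "j < length q"
  then show "q ! j ! k = q ! 0 ! k"
  proof (induction j)
    case 0 then show ?case by simp
  next
    case (Suc j)
    then have e: "{q ! j, q ! Suc j} \<in> E" "edge_dir (q ! j) (q ! Suc j) \<in> D"
      using g unfolding mygeod_def by auto
    have adj: "cube_adj (q ! j) (q ! Suc j)" using edge_adj(1)[OF sub e(1)] .
    have "q ! j ! k = q ! Suc j ! k"
    proof (cases "k < length (q ! j)")
      case True
      then show ?thesis using adj_same[OF adj True] e(2) kD by auto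
    next
      case False
      have "q ! j \<in> V" using edge_adj(2)[OF sub e(1)] .
      then show ?thesis using False sub_len[OF sub] kn by auto
    qed
    with Suc show ?case by simp
  qed
qed


lemma mygeod_mono: "mygeod V E D p \<Longrightarrow> D \<subseteq> D' \<Longrightarrow> mygeod V E D' p"
  unfolding mygeod_def by blast

lemma mygeod_cons:
  assumes sub: "cube_subgraph n V E" and g: "mygeod V E D q" and kD: "k \<notin> D" and kn: "k < n"
    and h: "hd q = flip k v" and vV: "v \<in> V" and e: "{v, flip k v} \<in> E"
  shows "mygeod V E (insert k D) (v # q)"
proof -
  have qne: "q \<noteq> []" using g unfolding mygeod_def by blast
  have q0: "q ! 0 = flip k v" using h qne by (simp add: hd_conv_nth)
  have lv: "length v = n" using sub_len[OF sub vV] .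
  have cp: "\<forall>j < length q. q ! j ! k = q ! 0 ! k" by (rule coord_path[OF sub g kD kn])
  have "v \<notin> set q"
  proof
    assume "v \<in> set q"
    then obtain j where "j < length q" "q ! j = v" by (auto simp: in_set_conv_nth)
    then have "v ! k = flip k v ! k" using cp q0 by auto
    then show False using kn lv by (simp add: flip_def)
  qed
  have dk: "edge_dir v (flip k v) = k" using flip_dir kn lv by simp
  let ?d = "\<lambda>j. edge_dir ((v # q) ! j) ((v # q) ! Suc j)"
  let ?dq = "\<lambda>j. edge_dir (q ! j) (q ! Suc j)"
  have dq: "\<forall>j < length q - 1. ?dq j \<in> D" using g unfolding mygeod_def by blast
  have d0: "?d 0 = k" using q0 dk by simp
  have dS: "?d (Suc j) = ?dq j" for j by simp
  have inj: "inj_on ?d {..<length (v # q) - 1}"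
  proof (rule inj_onI)
    fix a b assume a: "a \<in> {..<length (v # q) - 1}" and b: "b \<in> {..<length (v # q) - 1}"
      and eq: "?d a = ?d b"
    show "a = b"
    proof (cases a)
      case 0
      then show ?thesis
      proof (cases b)
        case (Suc b')
        then have "?dq b' \<in> D" using b dq by auto
        then show ?thesis using eq 0 Suc d0 kD by simp
      qed simp
    next
      case (Suc a')
      then have ad: "?dq a' \<in> D" using a dq by auto
      show ?thesis
      proof (cases b)
        case 0 then show ?thesis using eq Suc d0 kD ad by simp
      next
        case (Suc b')
        have "inj_on ?dq {..<length q - 1}" using g unfolding mygeod_def by blast
        then have "a' = b'" using eq a b \<open>a = Suc a'\<close> Suc by (auto dest: inj_onD)
        then show ?thesis using \<open>a = Suc a'\<close> Suc by simp
      qed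
    qed
  qed
  have edges: "\<forall>j < length (v # q) - 1. {(v # q) ! j, (v # q) ! Suc j} \<in> E \<and> ?d j \<in> insert k D"
  proof (intro allI impI)
    fix j assume j: "j < length (v # q) - 1"
    show "{(v # q) ! j, (v # q) ! Suc j} \<in> E \<and> ?d j \<in> insert k D"
    proof (cases j)
      case 0 then show ?thesis using e q0 d0 by simp
    next
      case (Suc i)
      then have "i < length q - 1" using j by simp
      then show ?thesis using g Suc unfolding mygeod_def by simp
    qed
  qed
  show ?thesis unfolding mygeod_def
    using g \<open>v \<notin> set q\<close> vV edges inj unfolding mygeod_def by auto
qed


lemma ED_split: "ED E (insert k D) = ED E D \<union> ED E {k}"
  unfolding ED_def by blast

lemma ED_disj:
  assumes "k \<notin> D" shows "ED E D \<inter> ED E {k} = {}"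
proof (rule ccontr)
  assume "ED E D \<inter> ED E {k} \<noteq> {}"
  then obtain e where e1: "e \<in> ED E D" and e2: "e \<in> ED E {k}" by blast
  then obtain u v where "e = {u,v}" "cube_adj u v" "edge_dir u v = k" unfolding ED_def by blast
  with ED_dir[OF e1] assms show False by auto
qed

lemma ED_k_edge:
  assumes "e \<in> ED E {k}" "x \<in> e" shows "e = {x, flip k x}"
proof -
  from assms obtain u v where uv: "e = {u,v}" "cube_adj u v" "edge_dir u v = k" unfolding ED_def by blast
  have "v = flip k u" using adj_flip[OF uv(2)] uv(3) by simp
  moreover have "u = flip k v" using adj_flip[OF adj_sym[OF uv(2)]] uv(3) dir_sym[of u v] uv(2)
    unfolding cube_adj_def by simp
  ultimately show ?thesis using uv assms(2) by auto
qed

lemma ED_all: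
  assumes sub: "cube_subgraph n V E" shows "ED E {..<n} = E"
proof
  show "ED E {..<n} \<subseteq> E" unfolding ED_def by blast
  show "E \<subseteq> ED E {..<n}"
  proof
    fix e assume e: "e \<in> E"
    then obtain u v where uv: "e = {u,v}" "u \<in> V" "cube_adj u v"
      using sub unfolding cube_subgraph_def by blast
    have "edge_dir u v < n" using dir_less[OF uv(3)] sub_len[OF sub uv(2)] by simp
    then show "e \<in> ED E {..<n}" using e uv unfolding ED_def by blast
  qed
qed

lemma S_card:
  assumes sub: "cube_subgraph n V E" and kn: "k < n"
  shows "card {v\<in>V. {v, flip k v} \<in> E} = 2 * card (ED E {k})"
proof -
  have fE: "finite E" using sub_finite[OF sub] by simp
  have U: "\<Union>(ED E {k}) = {v\<in>V. {v, flip k v} \<in> E}"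
  proof
    show "\<Union>(ED E {k}) \<subseteq> {v\<in>V. {v, flip k v} \<in> E}"
    proof
      fix x assume "x \<in> \<Union>(ED E {k})"
      then obtain e where e: "e \<in> ED E {k}" "x \<in> e" by blast
      then have "e = {x, flip k x}" by (rule ED_k_edge)
      moreover have "e \<in> E" using e unfolding ED_def by blast
      ultimately show "x \<in> {v\<in>V. {v, flip k v} \<in> E}" using edge_adj(2)[OF sub] by auto
    qed
    show "{v\<in>V. {v, flip k v} \<in> E} \<subseteq> \<Union>(ED E {k})"
    proof
      fix x assume x: "x \<in> {v\<in>V. {v, flip k v} \<in> E}"
      then have l: "k < length x" using sub_len[OF sub] kn by auto
      have "{x, flip k x} \<in> ED E {k}" unfolding ED_def
        using x flip_adj[OF l] flip_dir[OF l] by blast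
      then show "x \<in> \<Union>(ED E {k})" by blast
    qed
  qed
  have pw: "pairwise disjnt (ED E {k})"
    unfolding pairwise_def disjnt_def
  proof (intro ballI impI)
    fix a b assume a: "a \<in> ED E {k}" and b: "b \<in> ED E {k}" and ne: "a \<noteq> b"
    show "a \<inter> b = {}"
    proof (rule ccontr)
      assume "a \<inter> b \<noteq> {}"
      then obtain x where "x \<in> a" "x \<in> b" by blast
      then have "a = {x, flip k x}" "b = {x, flip k x}" using ED_k_edge[OF a] ED_k_edge[OF b] by auto
      with ne show False by simp
    qed
  qed
  have c2: "card e = 2" if "e \<in> ED E {k}" for e
  proof -
    from that obtain u v where "e = {u,v}" "cube_adj u v" unfolding ED_def by blast
    then show ?thesis using adj_neq by auto
  qed
  have "card (\<Union>(ED E {k})) = sum card (ED E {k})"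
    by (rule card_Union_disjoint[OF pw]) (auto simp: ED_def)
  also have "\<dots> = sum (\<lambda>_. 2) (ED E {k})" using c2 by simp
  also have "\<dots> = 2 * card (ED E {k})" by simp
  finally show ?thesis using U by simp
qed


lemma main:
  assumes sub: "cube_subgraph n V E" and fD: "finite D"
  shows "D \<subseteq> {..<n} \<Longrightarrow> \<exists>f. (\<forall>v\<in>V. mygeod V E D (f v) \<and> hd (f v) = v) \<and>
           2 * card (ED E D) \<le> (\<Sum>v\<in>V. length (f v) - 1)"
  using fD
proof (induction D rule: finite_induct)
  case empty
  have "mygeod V E {} [v]" if "v \<in> V" for v using that unfolding mygeod_def by simp
  moreover have "ED E {} = {}" unfolding ED_def by blast
  ultimately show ?case by (intro exI[of _ "\<lambda>v. [v]"]) auto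
next
  case (insert k D)
  have kn: "k < n" using insert.prems by auto
  obtain f where f: "\<forall>v\<in>V. mygeod V E D (f v) \<and> hd (f v) = v"
    and fs: "2 * card (ED E D) \<le> (\<Sum>v\<in>V. length (f v) - 1)"
    using insert.IH insert.prems by auto
  define S where "S = {v\<in>V. {v, flip k v} \<in> E}"
  define g where "g v = (if v \<in> S then v # f (flip k v) else f v)" for v
  have fV: "finite V" using sub_finite[OF sub] by simp
  have SV: "S \<subseteq> V" unfolding S_def by blast
  have fS: "flip k v \<in> S" if "v \<in> S" for v
  proof -
    have e: "{v, flip k v} \<in> E" using that unfolding S_def by blast
    then have "flip k v \<in> V" using edge_adj(3)[OF sub] by blast
    moreover have "{flip k v, flip k (flip k v)} \<in> E" using e by (simp add: flip_flip insert_commute)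
    ultimately show ?thesis unfolding S_def by blast
  qed
  have gg: "\<forall>v\<in>V. mygeod V E (insert k D) (g v) \<and> hd (g v) = v"
  proof
    fix v assume v: "v \<in> V"
    show "mygeod V E (insert k D) (g v) \<and> hd (g v) = v"
    proof (cases "v \<in> S")
      case True
      have w: "flip k v \<in> V" using fS[OF True] SV by blast
      have "mygeod V E (insert k D) (v # f (flip k v))"
        using mygeod_cons[OF sub _ insert.hyps(2) kn _ v] f w True unfolding S_def by blast
      then show ?thesis using True unfolding g_def by simp
    next
      case False
      then show ?thesis using f v mygeod_mono[of V E D _ "insert k D"] unfolding g_def by auto
    qed
  qed
  let ?L = "\<lambda>v. length (f v) - 1"
  have lenS: "length (g v) - 1 = ?L (flip k v) + 1" if "v \<in> S" for v
  proof -
    have "f (flip k v) \<noteq> []" using f fS[OF that] SV unfolding mygeod_def by blast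
    then show ?thesis using that unfolding g_def by simp
  qed
  have s1: "(\<Sum>v\<in>V. length (g v) - 1) = (\<Sum>v\<in>V - S. length (g v) - 1) + (\<Sum>v\<in>S. length (g v) - 1)"
    by (rule sum.subset_diff[OF SV fV])
  have s2: "(\<Sum>v\<in>V - S. length (g v) - 1) = (\<Sum>v\<in>V - S. ?L v)"
    by (rule sum.cong) (auto simp: g_def)
  have s3: "(\<Sum>v\<in>S. length (g v) - 1) = (\<Sum>v\<in>S. ?L (flip k v) + 1)"
    by (rule sum.cong[OF refl], rule lenS)
  have s4: "(\<Sum>v\<in>S. ?L (flip k v) + 1) = (\<Sum>v\<in>S. ?L (flip k v)) + card S"
    using sum.distrib[of "\<lambda>v. ?L (flip k v)" "\<lambda>_. 1" S] by simp
  have s5: "(\<Sum>v\<in>S. ?L (flip k v)) = (\<Sum>v\<in>S. ?L v)"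
    by (rule sum.reindex_bij_witness[of _ "flip k" "flip k"]) (auto simp: flip_flip fS)
  have s6: "(\<Sum>v\<in>V. ?L v) = (\<Sum>v\<in>V - S. ?L v) + (\<Sum>v\<in>S. ?L v)"
    by (rule sum.subset_diff[OF SV fV])
  have sumg: "(\<Sum>v\<in>V. length (g v) - 1) = (\<Sum>v\<in>V. ?L v) + card S"
    apply (subst s1, subst s2, subst s3, subst s4, subst s5, subst s6)
    by (rule add.assoc[symmetric])
  have cS: "card S = 2 * card (ED E {k})" unfolding S_def by (rule S_card[OF sub kn])
  have fE: "finite E" using sub_finite[OF sub] by simp
  have "card (ED E (insert k D)) = card (ED E D) + card (ED E {k})"
    unfolding ED_split[of E k D]
  proof (rule card_Un_disjoint)
    show "finite (ED E D)" by (rule finite_subset[OF _ fE]) (unfold ED_def, blast)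
    show "finite (ED E {k})" by (rule finite_subset[OF _ fE]) (unfold ED_def, blast)
    show "ED E D \<inter> ED E {k} = {}" by (rule ED_disj[OF insert.hyps(2)])
  qed
  then have "2 * card (ED E (insert k D)) \<le> (\<Sum>v\<in>V. length (g v) - 1)"
    using sumg cS fs by simp
  with gg show ?case by blast
qed

theorem theorem2:
  fixes n :: nat and V :: "bool list set" and E :: "bool list set set"
  assumes "n \<ge> 1" and "cube_subgraph n V E" and "V \<noteq> {}"
  shows "\<exists>p. is_geodesic V E p \<and> real (length p - 1) \<ge> avg_degree V E"
proof -
  note sub = assms(2)
  obtain f where f: "\<forall>v\<in>V. mygeod V E {..<n} (f v) \<and> hd (f v) = v"
    and fs: "2 * card (ED E {..<n}) \<le> (\<Sum>v\<in>V. length (f v) - 1)"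
    using main[OF sub, of "{..<n}"] by auto
  have fV: "finite V" using sub_finite[OF sub] by simp
  have cV: "card V > 0" using fV assms(3) by (simp add: card_gt_0_iff)
  have fs': "2 * real (card E) \<le> (\<Sum>v\<in>V. real (length (f v) - 1))"
  proof -
    have "2 * card E \<le> (\<Sum>v\<in>V. length (f v) - 1)" using fs ED_all[OF sub] by simp
    then have "real (2 * card E) \<le> real (\<Sum>v\<in>V. length (f v) - 1)" by (simp only: of_nat_le_iff)
    then show ?thesis by (simp only: of_nat_mult of_nat_sum of_nat_numeral)
  qed
  have "\<exists>v\<in>V. real (length (f v) - 1) \<ge> avg_degree V E"
  proof (rule ccontr)
    assume "\<not> ?thesis"
    then have lt: "\<forall>v\<in>V. real (length (f v) - 1) < avg_degree V E" by auto
    have "(\<Sum>v\<in>V. real (length (f v) - 1)) < (\<Sum>v\<in>V. avg_degree V E)"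
      by (rule sum_strict_mono[OF fV assms(3)]) (use lt in auto)
    also have "\<dots> = 2 * real (card E)" using cV unfolding avg_degree_def by simp
    finally show False using fs' by linarith
  qed
  then obtain v where v: "v \<in> V" "real (length (f v) - 1) \<ge> avg_degree V E" by blast
  have "is_geodesic V E (f v)" using f v(1) unfolding mygeod_def is_geodesic_def is_path_def by blast
  with v show ?thesis by blast
qed

end
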